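(* Let $\mathcal{N}$ be a nest in a complex Hilbert space $H$ with $\dim H\ge 2$, and let $\mathcal{A}=\mathcal{T}(\mathcal{N})$ be the associated nest algebra. Then $\operatorname{JCent}(\mathcal{A})=\operatorname{Cent}(\mathcal{A})$.
   Context: A nest is a chain $\mathcal{N}$ of closed subspaces of $H$ containing $\{0\}$ and $H$, closed under arbitrary intersections and closed linear spans. The nest algebra is $\mathcal{T}(\mathcal{N})=\{T\in\mathcal{B}(H): T(N)\subseteq N \text{ for all } N\in\mathcal{N}\}$, where $\mathcal{B}(H)$ is the algebra of bounded operators on $H$. $x\circ y=xy+yx$. $\operatorname{JCent}(\mathcal{A})$: linear $f:\mathcal{A}\to\mathcal{A}$ with $f(x\circ y)=f(x)\circ y$ for all $x,y$. $\operatorname{Cent}(\mathcal{A})$: linear $f$ with $f(xy)=f(x)y=xf(y)$ for all $x,y$. *)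

theory Defs
  imports "HOL-Analysis.Analysis"
begin

text \<open>A complex Hilbert space is modelled as a real Hilbert space (type class
  real_inner + complete_space, whose inner product is the real part of the complex
  one) together with a complex structure J (multiplication by the imaginary unit):
  J is real-linear, J (J x) = - x, and J is orthogonal.\<close>

definition complex_structure :: "('a::real_inner \<Rightarrow> 'a) \<Rightarrow> bool" where
  "complex_structure J \<longleftrightarrow> linear J \<and> (\<forall>x. J (J x) = - x) \<and> (\<forall>x y. inner (J x) (J y) = inner x y)"

definition cscale :: "('a::real_vector \<Rightarrow> 'a) \<Rightarrow> complex \<Rightarrow> 'a \<Rightarrow> 'a" where
  "cscale J c x = Re c *\<^sub>R x + Im c *\<^sub>R J x"

definition cdim_ge_2 :: "('a::real_vector \<Rightarrow> 'a) \<Rightarrow> bool" where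
  "cdim_ge_2 J \<longleftrightarrow> (\<exists>x y. \<forall>a b. cscale J a x + cscale J b y = 0 \<longrightarrow> a = 0 \<and> b = 0)"

definition csubspace :: "('a::real_vector \<Rightarrow> 'a) \<Rightarrow> 'a set \<Rightarrow> bool" where
  "csubspace J M \<longleftrightarrow> subspace M \<and> (\<forall>x\<in>M. J x \<in> M)"

definition cspan :: "('a::real_vector \<Rightarrow> 'a) \<Rightarrow> 'a set \<Rightarrow> 'a set" where
  "cspan J X = \<Inter>{M. csubspace J M \<and> X \<subseteq> M}"

definition nest :: "('a::real_normed_vector \<Rightarrow> 'a) \<Rightarrow> 'a set set \<Rightarrow> bool" where
  "nest J \<N> \<longleftrightarrow>
     (\<forall>M\<in>\<N>. closed M \<and> csubspace J M) \<and>
     {0} \<in> \<N> \<and> UNIV \<in> \<N> \<and>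
     (\<forall>M\<in>\<N>. \<forall>L\<in>\<N>. M \<subseteq> L \<or> L \<subseteq> M) \<and>
     (\<forall>S\<subseteq>\<N>. \<Inter>S \<in> \<N>) \<and>
     (\<forall>S\<subseteq>\<N>. closure (cspan J (\<Union>S)) \<in> \<N>)"

text \<open>B(H): bounded complex-linear operators on H (real bounded linear maps commuting with J).\<close>
definition bops :: "('a::real_normed_vector \<Rightarrow> 'a) \<Rightarrow> ('a \<Rightarrow> 'a) set" where
  "bops J = {T. bounded_linear T \<and> (\<forall>x. T (J x) = J (T x))}"

definition nest_algebra :: "('a::real_normed_vector \<Rightarrow> 'a) \<Rightarrow> 'a set set \<Rightarrow> ('a \<Rightarrow> 'a) set" where
  "nest_algebra J \<N> = {T \<in> bops J. \<forall>N\<in>\<N>. T ` N \<subseteq> N}"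

definition opscale :: "('a::real_vector \<Rightarrow> 'a) \<Rightarrow> complex \<Rightarrow> ('a \<Rightarrow> 'a) \<Rightarrow> ('a \<Rightarrow> 'a)" where
  "opscale J c T = (\<lambda>v. cscale J c (T v))"

definition jprod :: "('a \<Rightarrow> 'a) \<Rightarrow> ('a \<Rightarrow> 'a) \<Rightarrow> ('a::plus \<Rightarrow> 'a)" where
  "jprod x y = (\<lambda>v. x (y v) + y (x v))"

definition alg_clinear :: "('a::real_vector \<Rightarrow> 'a) \<Rightarrow> ('a \<Rightarrow> 'a) set \<Rightarrow> (('a \<Rightarrow> 'a) \<Rightarrow> ('a \<Rightarrow> 'a)) \<Rightarrow> bool" where
  "alg_clinear J A f \<longleftrightarrow> (\<forall>x\<in>A. f x \<in> A) \<and>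
     (\<forall>x\<in>A. \<forall>y\<in>A. f (\<lambda>v. x v + y v) = (\<lambda>v. f x v + f y v)) \<and>
     (\<forall>c. \<forall>x\<in>A. f (opscale J c x) = opscale J c (f x))"

definition JCent :: "('a::real_vector \<Rightarrow> 'a) \<Rightarrow> ('a \<Rightarrow> 'a) set \<Rightarrow> (('a \<Rightarrow> 'a) \<Rightarrow> ('a \<Rightarrow> 'a)) set" where
  "JCent J A = {f. alg_clinear J A f \<and> (\<forall>x\<in>A. \<forall>y\<in>A. f (jprod x y) = jprod (f x) y)}"

definition Cent :: "('a::real_vector \<Rightarrow> 'a) \<Rightarrow> ('a \<Rightarrow> 'a) set \<Rightarrow> (('a \<Rightarrow> 'a) \<Rightarrow> ('a \<Rightarrow> 'a)) set" where
  "Cent J A = {f. alg_clinear J A f \<and> (\<forall>x\<in>A. \<forall>y\<in>A. f (x \<circ> y) = f x \<circ> y \<and> f (x \<circ> y) = x \<circ> f y)}"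

end

theory Submission
  imports Defs
begin

lemma proj_exists:
  fixes N :: "'a::{real_inner,complete_space} set"
  assumes cl: "closed N" and sub: "subspace N"
  shows "\<exists>p\<in>N. \<forall>y\<in>N. inner (v - p) y = 0"
proof -
  have ne: "N \<noteq> {}" using sub subspace_0 by blast
  define d where "d = infdist v N"
  have d0: "0 \<le> d" unfolding d_def by (rule infdist_nonneg)
  have dle: "d \<le> norm (v - x)" if "x \<in> N" for x
    using infdist_le[OF that, of v] unfolding d_def by (simp add: dist_norm)
  have "\<exists>x\<in>N. norm (v - x) < d + 1 / real (Suc n)" for n
  proof -
    have "Inf (dist v ` N) < d + 1 / real (Suc n)"
      using infdist_notempty[OF ne, of v] unfolding d_def[symmetric] by simp
    then obtain r where "r \<in> dist v ` N" "r < d + 1 / real (Suc n)"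
      using cInf_lessD[of "dist v ` N"] ne by blast
    then show ?thesis by (auto simp: dist_norm)
  qed
  then obtain X where XN: "\<And>n. X n \<in> N" and Xd: "\<And>n. norm (v - X n) < d + 1 / real (Suc n)"
    by metis
  define e where "e n = 1 / real (Suc n)" for n
  have e0: "0 < e n" "e n \<le> 1" for n unfolding e_def by (auto simp: field_simps)
  have key: "(norm (X n - X m))^2 \<le> (4*d+2) * (e n + e m)" for n m
  proof -
    have mid: "(1/2) *\<^sub>R (X n + X m) \<in> N"
      using XN sub by (simp add: subspace_add subspace_scale)
    have "d \<le> norm (v - (1/2) *\<^sub>R (X n + X m))" by (rule dle[OF mid])
    also have "v - (1/2) *\<^sub>R (X n + X m) = (1/2) *\<^sub>R ((v - X n) + (v - X m))"
    proof -
      have "(1/2::real) *\<^sub>R ((v - X n) + (v - X m)) = (1/2::real) *\<^sub>R (2 *\<^sub>R v - (X n + X m))"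
        by (simp add: algebra_simps scaleR_2)
      also have "\<dots> = v - (1/2) *\<^sub>R (X n + X m)" by (simp add: scaleR_diff_right)
      finally show ?thesis by simp
    qed
    finally have h1: "2 * d \<le> norm ((v - X n) + (v - X m))" by simp
    have par: "(norm ((v - X n) - (v - X m)))^2 + (norm ((v - X n) + (v - X m)))^2
        = 2 * (norm (v - X n))^2 + 2 * (norm (v - X m))^2"
      by (simp add: power2_norm_eq_inner inner_add_left inner_add_right inner_diff_left inner_diff_right inner_commute)
    have "(v - X n) - (v - X m) = X m - X n" by simp
    hence nd: "norm ((v - X n) - (v - X m)) = norm (X n - X m)" by (simp add: norm_minus_commute)
    have h2: "(2*d)^2 \<le> (norm ((v - X n) + (v - X m)))^2"
      by (rule power_mono[OF h1]) (use d0 in simp)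
    have a1: "(norm (v - X n))^2 \<le> (d + e n)^2"
      by (rule power_mono) (use Xd[of n] e_def in auto)
    have a2: "(norm (v - X m))^2 \<le> (d + e m)^2"
      by (rule power_mono) (use Xd[of m] e_def in auto)
    have "(norm (X n - X m))^2 \<le> 2*(d + e n)^2 + 2*(d + e m)^2 - (2*d)^2"
    proof -
      have par': "(norm (X n - X m))^2 + (norm ((v - X n) + (v - X m)))^2
        = 2 * (norm (v - X n))^2 + 2 * (norm (v - X m))^2" using par nd by simp
      show ?thesis using par' h2 a1 a2 by linarith
    qed
    also have "\<dots> = 4*d*e n + 2 * (e n)^2 + 4*d*e m + 2*(e m)^2"
      by (simp add: power2_eq_square algebra_simps)
    also have "\<dots> \<le> (4*d+2) * (e n + e m)"
    proof -
      have "(e n)^2 \<le> e n" "(e m)^2 \<le> e m" using e0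
        by (simp_all add: power2_eq_square mult_le_cancel_right1 mult_left_le_one_le less_imp_le)
      then show ?thesis by (simp add: algebra_simps)
    qed
    finally show ?thesis .
  qed
  have "Cauchy X"
  proof (rule metric_CauchyI)
    fix \<epsilon> :: real assume ep: "0 < \<epsilon>"
    obtain M :: nat where M: "(8*d+4) / \<epsilon>^2 < real M"
      using reals_Archimedean2 by blast
    have "\<forall>m\<ge>M. \<forall>n\<ge>M. dist (X m) (X n) < \<epsilon>"
    proof (intro allI impI)
      fix m n assume mM: "m \<ge> M" and nM: "n \<ge> M"
      have em: "e m \<le> 1 / real (Suc M)" "e n \<le> 1 / real (Suc M)"
        unfolding e_def using mM nM by (auto simp: field_simps)
      have "(dist (X m) (X n))^2 \<le> (4*d+2) * (e m + e n)"
        using key[of m n] by (simp add: dist_norm)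
      also have "\<dots> \<le> (4*d+2) * (2 / real (Suc M))"
        using em d0 by (intro mult_left_mono) auto
      also have "\<dots> < \<epsilon>^2"
      proof -
        have "(8*d+4) < \<epsilon>^2 * real M" using M ep by (simp add: field_simps)
        also have "\<dots> \<le> \<epsilon>^2 * real (Suc M)" using ep by (intro mult_left_mono) auto
        finally show ?thesis by (simp add: field_simps)
      qed
      finally have "(dist (X m) (X n))^2 < \<epsilon>^2" .
      then show "dist (X m) (X n) < \<epsilon>"
        using ep by (meson power_less_imp_less_base less_imp_le)
    qed
    then show "\<exists>M. \<forall>m\<ge>M. \<forall>n\<ge>M. dist (X m) (X n) < \<epsilon>" by blast
  qed
  then obtain p where lim: "X \<longlonglongrightarrow> p"
    using Cauchy_convergent convergent_def by blast
  have pN: "p \<in> N" using closed_sequentially[OF cl XN lim] .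
  have "norm (v - p) \<le> d"
  proof (rule LIMSEQ_le)
    show "(\<lambda>n. norm (v - X n)) \<longlonglongrightarrow> norm (v - p)"
      by (intro tendsto_intros lim)
    show "(\<lambda>n. d + e n) \<longlonglongrightarrow> d"
      unfolding e_def using tendsto_add[OF tendsto_const LIMSEQ_Suc[OF lim_1_over_n], of d]
      by simp
    show "\<exists>N. \<forall>n\<ge>N. norm (v - X n) \<le> d + e n"
      using Xd less_imp_le unfolding e_def by blast
  qed
  hence pmin: "norm (v - p) \<le> norm (v - x)" if "x \<in> N" for x
    using dle[OF that] by linarith
  have "inner (v - p) y = 0" if yN: "y \<in> N" for y
  proof (cases "y = 0")
    case True then show ?thesis by simp
  next
    case False
    define t where "t = inner (v - p) y / inner y y"
    have yy: "0 < inner y y" using False by simp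
    have "p + t *\<^sub>R y \<in> N" using pN yN sub by (simp add: subspace_add subspace_scale)
    hence "norm (v - p) \<le> norm ((v - p) - t *\<^sub>R y)" using pmin[of "p + t *\<^sub>R y"] by (simp add: algebra_simps)
    hence "inner (v - p) (v - p) \<le> inner ((v - p) - t *\<^sub>R y) ((v - p) - t *\<^sub>R y)"
      by (simp add: norm_le)
    hence "0 \<le> t * t * inner y y - 2 * t * inner (v - p) y"
      by (simp add: inner_diff_left inner_diff_right inner_commute algebra_simps)
    also have "\<dots> = - ((inner (v - p) y)^2 / inner y y)"
      unfolding t_def using yy by (simp add: field_simps power2_eq_square)
    finally have h: "(inner (v - p) y)^2 / inner y y \<le> 0" by linarith
    have "(inner (v - p) y)^2 \<le> 0"
    proof (rule ccontr)
      assume "\<not> (inner (v - p) y)^2 \<le> 0"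
      hence "0 < (inner (v - p) y)^2 / inner y y" using yy by simp
      thus False using h by simp
    qed
    then show ?thesis by simp
  qed
  then show ?thesis using pN by blast
qed


lemma cs_linear: "complex_structure J \<Longrightarrow> linear J" by (simp add: complex_structure_def)
lemma cs_JJ[simp]: "complex_structure J \<Longrightarrow> J (J x) = - x" by (simp add: complex_structure_def)
lemma cs_inner: "complex_structure J \<Longrightarrow> inner (J x) (J y) = inner x y" by (simp add: complex_structure_def)

lemma cs_add: "complex_structure J \<Longrightarrow> J (x + y) = J x + J y"
  using cs_linear linear_add by blast
lemma cs_scale: "complex_structure J \<Longrightarrow> J (r *\<^sub>R x) = r *\<^sub>R J x"
  using cs_linear linear_scale by blast
lemma cs_diff: "complex_structure J \<Longrightarrow> J (x - y) = J x - J y"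
  using cs_linear linear_diff by blast
lemma cs_neg: "complex_structure J \<Longrightarrow> J (- x) = - J x"
  using cs_linear linear_neg by blast
lemma cs_zero: "complex_structure J \<Longrightarrow> J 0 = 0"
  using cs_linear linear_0 by blast

lemma inner_J_swap:
  assumes "complex_structure J" shows "inner (J x) y = - inner x (J y)"
proof -
  have "inner (J x) y = inner (J (J x)) (J y)" using cs_inner[OF assms] by simp
  also have "\<dots> = - inner x (J y)" using assms by simp
  finally show ?thesis .
qed

lemma inner_J_self: assumes "complex_structure J" shows "inner (J x) x = 0"
proof -
  have "inner (J x) x = - inner x (J x)" by (rule inner_J_swap[OF assms])
  then show ?thesis by (simp add: inner_commute)
qed

lemma cscale_add_left: "cscale J (a + b) x = cscale J a x + cscale J b x"
  by (simp add: cscale_def algebra_simps)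
lemma cscale_diff_left: "cscale J (a - b) x = cscale J a x - cscale J b x"
  by (simp add: cscale_def algebra_simps)
lemma cscale_add_right: "complex_structure J \<Longrightarrow> cscale J c (x + y) = cscale J c x + cscale J c y"
  by (simp add: cscale_def cs_add algebra_simps)
lemma cscale_one[simp]: "cscale J 1 x = x" by (simp add: cscale_def)
lemma cscale_zero[simp]: "cscale J 0 x = 0" by (simp add: cscale_def)
lemma cscale_of_real: "cscale J (of_real r) x = r *\<^sub>R x" by (simp add: cscale_def)
lemma cscale_ii: "cscale J \<i> x = J x" by (simp add: cscale_def)

lemma cscale_mult:
  assumes "complex_structure J" shows "cscale J a (cscale J b x) = cscale J (a * b) x"
  using assms by (simp add: cscale_def cs_add cs_scale algebra_simps)

lemma J_cscale: assumes "complex_structure J" shows "J (cscale J c x) = cscale J c (J x)"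
  using assms by (simp add: cscale_def cs_add cs_scale algebra_simps)

lemma cscale_eq0:
  assumes cs: "complex_structure J" and h: "cscale J c x = 0" and x: "x \<noteq> 0"
  shows "c = 0"
proof -
  have "cscale J (cnj c * c) x = 0" using h cscale_mult[OF cs, of "cnj c" c x, symmetric]
    by (simp add: cscale_def cs_zero[OF cs])
  moreover have "cnj c * c = of_real ((cmod c)^2)"
    by (metis complex_norm_square mult.commute of_real_power)
  ultimately have "(cmod c)^2 *\<^sub>R x = 0" using cscale_of_real[of J "(cmod c)^2" x] by simp
  then show ?thesis using x by simp
qed

lemma cscale_cancel:
  assumes cs: "complex_structure J" and h: "cscale J a x = cscale J b x" and x: "x \<noteq> 0"
  shows "a = b"
proof -
  have "cscale J (a - b) x = 0" using h by (simp add: cscale_diff_left)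
  from cscale_eq0[OF cs this x] show ?thesis by simp
qed

lemma bops_linear: "T \<in> bops J \<Longrightarrow> linear T"
  by (simp add: bops_def bounded_linear.linear)
lemma bops_J: "T \<in> bops J \<Longrightarrow> T (J x) = J (T x)"
  by (simp add: bops_def)
lemma bops_cscale: "T \<in> bops J \<Longrightarrow> T (cscale J c x) = cscale J c (T x)"
  using bops_linear[of T J] bops_J[of T J]
  by (simp add: cscale_def linear_add linear_scale)

definition ci :: "('a::real_inner \<Rightarrow> 'a) \<Rightarrow> 'a \<Rightarrow> 'a \<Rightarrow> complex" where
  "ci J w v = Complex (inner w v) (inner (J w) v)"

lemma Re_ci[simp]: "Re (ci J w v) = inner w v" by (simp add: ci_def)
lemma Im_ci[simp]: "Im (ci J w v) = inner (J w) v" by (simp add: ci_def)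

lemma ci_add: "ci J w (x + y) = ci J w x + ci J w y"
  by (simp add: ci_def complex_eq_iff inner_add_right)
lemma ci_diff: "ci J w (x - y) = ci J w x - ci J w y"
  by (simp add: ci_def complex_eq_iff inner_diff_right)
lemma ci_J: assumes cs: "complex_structure J" shows "ci J w (J v) = \<i> * ci J w v"
  using inner_J_swap[OF cs, of w v] cs_inner[OF cs, of w v]
  by (simp add: ci_def complex_eq_iff)
lemma ci_cscale: assumes cs: "complex_structure J" shows "ci J w (cscale J c v) = c * ci J w v"
  using ci_J[OF cs, of w v]
  by (simp add: cscale_def ci_add complex_eq_iff inner_add_right)
lemma ci_self: assumes cs: "complex_structure J" shows "ci J w w = of_real (inner w w)"
  using inner_J_self[OF cs, of w] by (simp add: complex_eq_iff)

definition rk :: "('a::real_inner \<Rightarrow> 'a) \<Rightarrow> 'a \<Rightarrow> 'a \<Rightarrow> 'a \<Rightarrow> 'a" where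
  "rk J u w = (\<lambda>v. cscale J (ci J w v) u)"

lemma rk_bops: assumes cs: "complex_structure J" shows "rk J u w \<in> bops J"
proof -
  have e: "rk J u w = (\<lambda>v. inner w v *\<^sub>R u + inner (J w) v *\<^sub>R J u)"
    by (simp add: rk_def cscale_def)
  have "bounded_linear (rk J u w)" unfolding e
    by (intro bounded_linear_intros bounded_linear_ident)
  moreover have "rk J u w (J x) = J (rk J u w x)" for x
    unfolding rk_def using ci_J[OF cs, of w x] J_cscale[OF cs] cscale_mult[OF cs] cscale_ii[of J]
    by (metis mult.commute)
  ultimately show ?thesis by (simp add: bops_def)
qed


lemma nestA_bops: "T \<in> nest_algebra J \<N> \<Longrightarrow> T \<in> bops J"
  by (simp add: nest_algebra_def)
lemma nestA_lin: "T \<in> nest_algebra J \<N> \<Longrightarrow> linear T"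
  by (simp add: nest_algebra_def) (metis bops_linear)
lemma nestA_cscale: "T \<in> nest_algebra J \<N> \<Longrightarrow> T (cscale J c x) = cscale J c (T x)"
  by (simp add: nest_algebra_def) (metis bops_cscale)

lemma nest_sub: "nest J \<N> \<Longrightarrow> M \<in> \<N> \<Longrightarrow> subspace M"
  by (simp add: nest_def csubspace_def)
lemma nest_J: "nest J \<N> \<Longrightarrow> M \<in> \<N> \<Longrightarrow> x \<in> M \<Longrightarrow> J x \<in> M"
  by (simp add: nest_def csubspace_def)
lemma nest_closed: "nest J \<N> \<Longrightarrow> M \<in> \<N> \<Longrightarrow> closed M"
  by (simp add: nest_def)
lemma nest_chain: "nest J \<N> \<Longrightarrow> M \<in> \<N> \<Longrightarrow> L \<in> \<N> \<Longrightarrow> M \<subseteq> L \<or> L \<subseteq> M"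
  by (simp add: nest_def)

lemma nest_cscale: "nest J \<N> \<Longrightarrow> M \<in> \<N> \<Longrightarrow> x \<in> M \<Longrightarrow> cscale J c x \<in> M"
  unfolding cscale_def using nest_sub nest_J
  by (metis subspace_add subspace_scale)

lemma rk_in_A:
  assumes cs: "complex_structure J" and n: "nest J \<N>"
    and h: "\<forall>M\<in>\<N>. u \<in> M \<or> (\<forall>m\<in>M. inner w m = 0)"
  shows "rk J u w \<in> nest_algebra J \<N>"
proof -
  have "rk J u w ` M \<subseteq> M" if M: "M \<in> \<N>" for M
  proof
    fix y assume "y \<in> rk J u w ` M"
    then obtain v where v: "v \<in> M" "y = rk J u w v" by blast
    show "y \<in> M"
    proof (cases "u \<in> M")
      case True then show ?thesis using v nest_cscale[OF n M] by (simp add: rk_def)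
    next
      case False
      then have o: "\<forall>m\<in>M. inner w m = 0" using h M by blast
      have "inner w v = 0" "inner w (J v) = 0" using o v nest_J[OF n M] by auto
      then have "ci J w v = 0" using inner_J_swap[OF cs, of w v] by (simp add: complex_eq_iff)
      then show ?thesis using v nest_sub[OF n M] subspace_0 by (simp add: rk_def)
    qed
  qed
  then show ?thesis using rk_bops[OF cs] by (simp add: nest_algebra_def)
qed

lemma central_rk:
  assumes cs: "complex_structure J" and zA: "z \<in> nest_algebra J \<N>"
    and zc: "\<forall>T\<in>nest_algebra J \<N>. \<forall>v. z (T v) = T (z v)"
    and rA: "rk J u w \<in> nest_algebra J \<N>"
  shows "cscale J (ci J w v) (z u) = cscale J (ci J w (z v)) u"
  using zc[rule_format, OF rA, of v] nestA_cscale[OF zA] by (simp add: rk_def)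

lemma central_eig:
  assumes cs: "complex_structure J" and zA: "z \<in> nest_algebra J \<N>"
    and zc: "\<forall>T\<in>nest_algebra J \<N>. \<forall>v. z (T v) = T (z v)"
    and rA: "rk J u w \<in> nest_algebra J \<N>" and w: "w \<noteq> 0"
  shows "z u = cscale J (ci J w (z w) / of_real (inner w w)) u"
proof -
  have "cscale J (of_real (inner w w)) (z u) = cscale J (ci J w (z w)) u"
    using central_rk[OF cs zA zc rA, of w] ci_self[OF cs] by simp
  hence "cscale J (1 / of_real (inner w w)) (cscale J (of_real (inner w w)) (z u))
      = cscale J (1 / of_real (inner w w)) (cscale J (ci J w (z w)) u)" by simp
  then show ?thesis using w by (simp add: cscale_mult[OF cs])
qed


lemma center_scalar:
  fixes J :: "'a::{real_inner, complete_space} \<Rightarrow> 'a"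
  assumes cs: "complex_structure J" and n: "nest J \<N>"
    and zA: "z \<in> nest_algebra J \<N>"
    and zc: "\<forall>T\<in>nest_algebra J \<N>. \<forall>v. z (T v) = T (z v)"
  shows "\<exists>l. \<forall>v. z v = cscale J l v"
proof (cases "\<forall>N\<in>\<N>. N = {0} \<or> N = UNIV")
  case True
  have rA: "rk J u w \<in> nest_algebra J \<N>" for u w
    by (rule rk_in_A[OF cs n]) (use True in auto)
  show ?thesis
  proof (cases "\<exists>w::'a. w \<noteq> 0")
    case True
    then obtain w :: 'a where w: "w \<noteq> 0" by blast
    show ?thesis using central_eig[OF cs zA zc rA w] by blast
  next
    case False
    then show ?thesis by (metis cscale_zero)
  qed
next
  case False
  then obtain N where NN: "N \<in> \<N>" and N0: "N \<noteq> {0}" and NU: "N \<noteq> UNIV" by blast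
  have cl: "closed N" and sub: "subspace N" using nest_closed[OF n NN] nest_sub[OF n NN] by auto
  have NJ: "x \<in> N \<Longrightarrow> J x \<in> N" for x using nest_J[OF n NN] .
  define orth where "orth w \<longleftrightarrow> (\<forall>m\<in>N. inner w m = 0)" for w
  define P where "P v = (SOME p. p \<in> N \<and> (\<forall>y\<in>N. inner (v - p) y = 0))" for v
  have P1: "P v \<in> N \<and> orth (v - P v)" for v
  proof -
    have "\<exists>p. p \<in> N \<and> (\<forall>y\<in>N. inner (v - p) y = 0)" using proj_exists[OF cl sub, of v] by blast
    from someI_ex[OF this] show ?thesis unfolding P_def orth_def by blast
  qed
  have Puniq: "P v = p" if "p \<in> N" "orth (v - p)" for v p
  proof -
    have d: "P v - p \<in> N" using P1[of v] that sub by (simp add: subspace_diff)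
    have "inner (P v - p) (P v - p) = inner ((v - p) - (v - P v)) (P v - p)"
      by (simp add: algebra_simps)
    also have "\<dots> = 0" using d that(2) P1[of v] by (simp add: orth_def inner_diff_left)
    finally show ?thesis by simp
  qed
  have PN: "P v = v" if "v \<in> N" for v using Puniq[OF that] by (simp add: orth_def)
  have Padd: "P (x + y) = P x + P y" for x y
    using P1[of x] P1[of y] sub
    by (intro Puniq) (auto simp: orth_def subspace_add algebra_simps inner_diff_left inner_add_left)
  have Pscale: "P (r *\<^sub>R x) = r *\<^sub>R P x" for r x
    using P1[of x] sub
    by (intro Puniq) (auto simp: orth_def subspace_scale scaleR_diff_right[symmetric])
  have PJ: "P (J x) = J (P x)" for x
  proof (rule Puniq)
    show "J (P x) \<in> N" using NJ P1 by blast
    show "orth (J x - J (P x))"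
      unfolding orth_def
    proof
      fix m assume m: "m \<in> N"
      have "inner (J x - J (P x)) m = inner (J (x - P x)) m" by (simp add: cs_diff[OF cs])
      also have "\<dots> = - inner (x - P x) (J m)" by (rule inner_J_swap[OF cs])
      also have "\<dots> = 0" using P1[of x] NJ[OF m] by (simp add: orth_def)
      finally show "inner (J x - J (P x)) m = 0" .
    qed
  qed
  have Pnorm: "norm (P x) \<le> norm x * 1" for x
  proof -
    have o: "inner (x - P x) (P x) = 0" using P1[of x] by (simp add: orth_def)
    have "inner x x = inner (P x + (x - P x)) (P x + (x - P x))" by simp
    also have "\<dots> = inner (P x) (P x) + inner (x - P x) (x - P x)"
      using o by (simp only: inner_add_left inner_add_right inner_commute[of "P x" "x - P x"])
    finally have "inner (P x) (P x) \<le> inner x x" by simp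
    then show ?thesis by (simp add: norm_le)
  qed
  have PA: "P \<in> nest_algebra J \<N>"
  proof -
    have "bounded_linear P" by (rule bounded_linear_intro[OF Padd Pscale Pnorm])
    moreover have "P ` M \<subseteq> M" if M: "M \<in> \<N>" for M
    proof (cases "N \<subseteq> M")
      case True then show ?thesis using P1 by blast
    next
      case False
      then have "M \<subseteq> N" using nest_chain[OF n NN M] by blast
      then show ?thesis using PN by auto
    qed
    ultimately show ?thesis by (simp add: nest_algebra_def bops_def PJ)
  qed
  obtain v0 where v0: "v0 \<notin> N" using NU by blast
  define w0 where "w0 = v0 - P v0"
  have w0o: "orth w0" using P1 w0_def by blast
  have w0n: "w0 \<noteq> 0" using v0 P1[of v0] w0_def by auto
  have rkA: "rk J u w \<in> nest_algebra J \<N>" if "u \<in> N" "orth w" for u w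
  proof (rule rk_in_A[OF cs n], intro ballI)
    fix M assume M: "M \<in> \<N>"
    show "u \<in> M \<or> (\<forall>m\<in>M. inner w m = 0)"
      using nest_chain[OF n NN M] that by (auto simp: orth_def)
  qed
  define l where "l = ci J w0 (z w0) / of_real (inner w0 w0)"
  have zN: "z u = cscale J l u" if "u \<in> N" for u
    unfolding l_def by (rule central_eig[OF cs zA zc rkA[OF that w0o] w0n])
  obtain u0 where u0: "u0 \<in> N" "u0 \<noteq> 0" using N0 sub subspace_0 by blast
  have ciz: "ci J w (z v) = l * ci J w v" if "orth w" for w v
  proof -
    have "cscale J (ci J w v) (z u0) = cscale J (ci J w (z v)) u0"
      by (rule central_rk[OF cs zA zc rkA[OF u0(1) that]])
    hence "cscale J (ci J w v * l) u0 = cscale J (ci J w (z v)) u0"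
      using zN[OF u0(1)] cscale_mult[OF cs] by simp
    then show ?thesis using cscale_cancel[OF cs _ u0(2)] by (simp add: mult.commute)
  qed
  have zlin: "linear z" using zA by (rule nestA_lin)
  have "z v = cscale J l v" for v
  proof -
    define q where "q = v - P v"
    have qo: "orth q" using P1 q_def by blast
    have N0': "0 \<in> N" by (rule subspace_0[OF sub])
    have Pq: "P q = 0" by (rule Puniq[OF N0']) (use qo in simp)
    have "P (z q) = z (P q)" using zc PA by metis
    hence Pzq: "P (z q) = 0" using Pq linear_0[OF zlin] by simp
    have zqo: "orth (z q)" using P1[of "z q"] Pzq by simp
    have lqo: "orth (cscale J l q)"
      unfolding orth_def
    proof
      fix m assume m: "m \<in> N"
      have "inner (J q) m = - inner q (J m)" by (rule inner_J_swap[OF cs])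
      then show "inner (cscale J l q) m = 0"
        using qo m NJ[OF m] by (simp add: orth_def cscale_def inner_add_left)
    qed
    define w' where "w' = z q - cscale J l q"
    have w'o: "orth w'" using zqo lqo by (simp add: w'_def orth_def inner_diff_left)
    have "ci J w' w' = ci J w' (z q) - ci J w' (cscale J l q)" by (simp add: w'_def ci_diff)
    also have "\<dots> = 0" using ciz[OF w'o, of q] ci_cscale[OF cs] by simp
    finally have "inner w' w' = 0" using Re_ci[of J w' w'] by simp
    hence zq: "z q = cscale J l q" by (simp add: w'_def)
    have "v = P v + q" by (simp add: q_def)
    hence "z v = z (P v) + z q" using linear_add[OF zlin, of "P v" q] by simp
    also have "\<dots> = cscale J l (P v) + cscale J l q" using zN P1 zq by simp
    also have "\<dots> = cscale J l v" using cscale_add_right[OF cs, of l "P v" q] q_def by simp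
    finally show ?thesis .
  qed
  then show ?thesis by blast
qed


lemma A_id: "complex_structure J \<Longrightarrow> (\<lambda>v. v) \<in> nest_algebra J \<N>"
  by (auto simp: nest_algebra_def bops_def bounded_linear_ident)
lemma A_comp: "x \<in> nest_algebra J \<N> \<Longrightarrow> y \<in> nest_algebra J \<N> \<Longrightarrow> x \<circ> y \<in> nest_algebra J \<N>"
  by (auto simp: nest_algebra_def bops_def comp_def bounded_linear_compose image_subset_iff)
lemma A_comp': "x \<in> nest_algebra J \<N> \<Longrightarrow> y \<in> nest_algebra J \<N> \<Longrightarrow> (\<lambda>v. x (y v)) \<in> nest_algebra J \<N>"
  using A_comp[of x J \<N> y] by (simp add: comp_def)
lemma A_add: assumes n: "nest J \<N>" and cs: "complex_structure J" shows "x \<in> nest_algebra J \<N> \<Longrightarrow> y \<in> nest_algebra J \<N> \<Longrightarrow> (\<lambda>v. x v + y v) \<in> nest_algebra J \<N>"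
  using nest_sub[OF n]
  by (auto simp: nest_algebra_def bops_def bounded_linear_add image_subset_iff subspace_add cs_add[OF cs])
lemma A_diff: assumes n: "nest J \<N>" and cs: "complex_structure J" shows "x \<in> nest_algebra J \<N> \<Longrightarrow> y \<in> nest_algebra J \<N> \<Longrightarrow> (\<lambda>v. x v - y v) \<in> nest_algebra J \<N>"
  using nest_sub[OF n]
  by (auto simp: nest_algebra_def bops_def bounded_linear_sub image_subset_iff subspace_diff cs_diff[OF cs])


theorem corollary3p9:
  fixes J :: "'a::{real_inner, complete_space} \<Rightarrow> 'a"
    and \<N> :: "'a set set"
  assumes "complex_structure J"
    and "cdim_ge_2 J"
    and "nest J \<N>"
  shows "JCent J (nest_algebra J \<N>) = Cent J (nest_algebra J \<N>)"
proof -
  note cs = assms(1) and n = assms(3)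
  let ?A = "nest_algebra J \<N>"
  have lin: "linear x" if "x \<in> ?A" for x using nestA_lin that .
  have "f \<in> JCent J ?A" if f: "f \<in> Cent J ?A" for f
  proof -
    have cl: "alg_clinear J ?A f" and fm: "\<forall>x\<in>?A. \<forall>y\<in>?A. f (x \<circ> y) = f x \<circ> y \<and> f (x \<circ> y) = x \<circ> f y"
      using f unfolding Cent_def by blast+
    have fadd: "\<forall>x\<in>?A. \<forall>y\<in>?A. f (\<lambda>v. x v + y v) = (\<lambda>v. f x v + f y v)"
      using cl by (simp add: alg_clinear_def)
    have "f (jprod x y) = jprod (f x) y" if x: "x \<in> ?A" and y: "y \<in> ?A" for x y
    proof -
      have "jprod x y = (\<lambda>v. (x \<circ> y) v + (y \<circ> x) v)" by (simp add: jprod_def)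
      hence "f (jprod x y) = (\<lambda>v. f (x \<circ> y) v + f (y \<circ> x) v)"
        using fadd[rule_format, OF A_comp[OF x y] A_comp[OF y x]] by simp
      also have "\<dots> = (\<lambda>v. f x (y v) + y (f x v))"
      proof -
        have "f (x \<circ> y) = f x \<circ> y" "f (y \<circ> x) = y \<circ> f x" using fm x y by blast+
        then show ?thesis by simp
      qed
      finally show ?thesis by (simp add: jprod_def)
    qed
    then show ?thesis using cl by (simp add: JCent_def)
  qed
  moreover have "f \<in> Cent J ?A" if f: "f \<in> JCent J ?A" for f
  proof -
    have cl: "alg_clinear J ?A f" and fj: "\<forall>x\<in>?A. \<forall>y\<in>?A. f (jprod x y) = jprod (f x) y"
      using f unfolding JCent_def by blast+
    have fA: "\<forall>x\<in>?A. f x \<in> ?A" and fadd: "\<forall>x\<in>?A. \<forall>y\<in>?A. f (\<lambda>v. x v + y v) = (\<lambda>v. f x v + f y v)"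
      using cl by (auto simp: alg_clinear_def)
    have idA: "(\<lambda>v. v) \<in> ?A" by (rule A_id[OF cs])
    define a where "a = f (\<lambda>v. v)"
    have aA: "a \<in> ?A" using fA idA a_def by blast
    have E1: "f y v + f y v = a (y v) + y (a v)" if y: "y \<in> ?A" for y v
    proof -
      have "jprod (\<lambda>v. v) y = (\<lambda>v. y v + y v)" by (simp add: jprod_def)
      hence "f (\<lambda>v. y v + y v) = jprod a y" using fj idA y a_def by metis
      moreover have "f (\<lambda>v. y v + y v) = (\<lambda>v. f y v + f y v)" using fadd y by blast
      ultimately show ?thesis by (simp add: jprod_def fun_eq_iff)
    qed
    have E2: "a (y (x v)) - y (a (x v)) = x (a (y v)) - x (y (a v))"
      if x: "x \<in> ?A" and y: "y \<in> ?A" for x y v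
    proof -
      have jA: "jprod x y \<in> ?A"
        using A_add[OF n cs A_comp'[OF x y] A_comp'[OF y x]] by (simp add: jprod_def)
      have fxA: "f x \<in> ?A" using fA x by blast
      have "f (jprod x y) v + f (jprod x y) v = jprod (f x) y v + jprod (f x) y v"
        using fj x y by simp
      also have "f (jprod x y) v + f (jprod x y) v = a (jprod x y v) + jprod x y (a v)"
        by (rule E1[OF jA])
      also have "jprod (f x) y v + jprod (f x) y v
          = (f x (y v) + f x (y v)) + y (f x v + f x v)"
        using linear_add[OF lin[OF y]] by (simp add: jprod_def algebra_simps)
      also have "\<dots> = (a (x (y v)) + x (a (y v))) + y (a (x v) + x (a v))"
        using E1[OF x] by simp
      finally have "a (x (y v) + y (x v)) + (x (y (a v)) + y (x (a v)))
          = (a (x (y v)) + x (a (y v))) + y (a (x v) + x (a v))"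
        by (simp add: jprod_def)
      then have "a (x (y v)) + a (y (x v)) + (x (y (a v)) + y (x (a v)))
          = (a (x (y v)) + x (a (y v))) + (y (a (x v)) + y (x (a v)))"
        using linear_add[OF lin[OF aA]] linear_add[OF lin[OF y]] by simp
      then have "a (y (x v)) + x (y (a v)) = x (a (y v)) + y (a (x v))"
        by (simp add: algebra_simps)
      then show ?thesis
        using linear_diff[OF lin[OF x]] by (simp add: algebra_simps)
    qed
    define c where "c y = (\<lambda>v. a (y v) - y (a v))" for y
    have cA: "c y \<in> ?A" if "y \<in> ?A" for y
      unfolding c_def by (rule A_diff[OF n cs A_comp'[OF aA that] A_comp'[OF that aA]])
    have ccen: "\<forall>T\<in>?A. \<forall>v. c y (T v) = T (c y v)" if "y \<in> ?A" for y
      using E2[OF _ that] linear_diff[OF lin] by (simp add: c_def)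
    have comm: "a (y v) = y (a v)" if y: "y \<in> ?A" for y v
    proof -
      obtain l where l: "\<And>v. c y v = cscale J l v"
        using center_scalar[OF cs n cA[OF y] ccen[OF y]] by blast
      have yyA: "(\<lambda>v. y (y v)) \<in> ?A" by (rule A_comp'[OF y y])
      obtain m where m: "\<And>v. c (\<lambda>v. y (y v)) v = cscale J m v"
        using center_scalar[OF cs n cA[OF yyA] ccen[OF yyA]] by blast
      have yy: "cscale J (2 * l) (y w) = cscale J m w" for w
      proof -
        have "c (\<lambda>v. y (y v)) w = c y (y w) + y (c y w)"
          using linear_diff[OF lin[OF y]] by (simp add: c_def)
        also have "\<dots> = cscale J l (y w) + cscale J l (y w)"
          using l nestA_cscale[OF y] by simp
        also have "\<dots> = cscale J (2 * l) (y w)"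
          by (metis cscale_add_left mult_2)
        finally show ?thesis using m by simp
      qed
      show ?thesis
      proof (cases "l = 0")
        case True
        then show ?thesis using l[of v] by (simp add: c_def)
      next
        case False
        have yv: "y w = cscale J (m / (2 * l)) w" for w
        proof -
          have "cscale J (1 / (2 * l)) (cscale J (2 * l) (y w)) = cscale J (1 / (2 * l)) (cscale J m w)"
            using yy by simp
          then show ?thesis using False by (simp add: cscale_mult[OF cs])
        qed
        show ?thesis using yv nestA_cscale[OF aA] by simp
      qed
    qed
    have fy: "f y v = a (y v)" if y: "y \<in> ?A" for y v
    proof -
      have "f y v + f y v = a (y v) + a (y v)" using E1[OF y] comm[OF y] by simp
      then have "2 *\<^sub>R f y v = 2 *\<^sub>R a (y v)" by (simp add: scaleR_2)
      then show ?thesis by simp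
    qed
    have "f (x \<circ> y) = f x \<circ> y \<and> f (x \<circ> y) = x \<circ> f y" if x: "x \<in> ?A" and y: "y \<in> ?A" for x y
      using fy[OF A_comp[OF x y]] fy[OF x] fy[OF y] comm[OF x] by (simp add: fun_eq_iff)
    then show ?thesis using cl unfolding Cent_def by blast
  qed
  ultimately show ?thesis by blast
qed

end
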